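(* Let $(G,\alpha)$ be an edge-labeled graph with $n$ vertices $v_1,\dots,v_n$ over $\mathbb{Z}/m\mathbb{Z}$, let $1<i\le j\le n$, and let $\bar F^{(i)}=(\bar 0,\dots,\bar 0,\bar f^{(i)}_{v_i},\dots,\bar f^{(i)}_{v_n})\in\mathcal F_i$ be an $i$-th flow-up class. Let $L=\big[\bigcup_{k=1}^{i-1}\{(p^{(j,k)})\}\big]$ be the least common multiple of the greatest common divisors of all $v_k$-trails of $v_j$, over all $k=1,\dots,i-1$. If $L\not\equiv 0 \pmod m$, then $\bar f^{(i)}_{v_j}$ is a multiple of $L+m\mathbb{Z}$ in $\mathbb{Z}/m\mathbb{Z}$.
   Context: Let $m\ge 2$ and $G=(V,E)$ a finite simple connected graph with ordered vertices $v_1,\dots,v_n$. An edge-labeling $\alpha$ assigns to each edge a nonzero ideal of $\mathbb{Z}/m\mathbb{Z}$; each edge $e$ is labeled by the ideal $\alpha(e)=\langle l_e+m\mathbb{Z}\rangle$ generated by the class of a positive integer $l_e$, the integer representative (smallest positive integer of the coset) of the label. A spline on $(G,\alpha)$ is $F=(f_{v_1},\dots,f_{v_n})\in(\mathbb{Z}/m\mathbb{Z})^n$ with $f_{v_a}-f_{v_b}\in\alpha(v_av_b)$ for each edge $v_av_b$. An $i$-th flow-up class is a spline with $f_{v_i}\ne0$ and $f_{v_t}=0$ for $t<i$; $\mathcal F_i$ is the set of these. A trail is a sequence $w_0,e_1,w_1,\dots,e_r,w_r$ of vertices and edges, $e_s=w_{s-1}w_s$, in which no edge is repeated; a $v_k$-trail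 of $v_j$ is a trail from $v_j$ to $v_k$. For such a trail $p^{(j,k)}$, $(p^{(j,k)})$ denotes the greatest common divisor (in $\mathbb{Z}$) of the integer representatives $l_e$ of the edges on it; $\{(p^{(j,k)})\}$ is the set of these values over all $v_k$-trails of $v_j$; $[\,S\,]$ denotes the least common multiple of a finite set $S$ of integers. *)

theory Defs
  imports Main "HOL-Number_Theory.Cong"
begin

text \<open>Vertices are the natural numbers 1..n (vertex v_a is the number a).\<close>

definition simple_graph :: "nat \<Rightarrow> (nat \<Rightarrow> nat \<Rightarrow> bool) \<Rightarrow> bool" where
  "simple_graph n E \<longleftrightarrow>
     (\<forall>a b. E a b \<longrightarrow> a \<in> {1..n} \<and> b \<in> {1..n} \<and> a \<noteq> b \<and> E b a)"

definition graph_connected :: "nat \<Rightarrow> (nat \<Rightarrow> nat \<Rightarrow> bool) \<Rightarrow> bool" where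
  "graph_connected n E \<longleftrightarrow> (\<forall>a\<in>{1..n}. \<forall>b\<in>{1..n}. E\<^sup>*\<^sup>* a b)"

text \<open>An edge labeling by nonzero ideals of Z/mZ, recorded by the smallest positive
  integer representative l of the generating class (so 0 < l < m).\<close>
definition edge_labeling :: "int \<Rightarrow> (nat \<Rightarrow> nat \<Rightarrow> bool) \<Rightarrow> (nat \<Rightarrow> nat \<Rightarrow> int) \<Rightarrow> bool" where
  "edge_labeling m E l \<longleftrightarrow> (\<forall>a b. E a b \<longrightarrow> l a b = l b a \<and> 0 < l a b \<and> l a b < m)"

text \<open>Splines: tuples of residues mod m represented by integers f a (a = 1..n);
  f a - f b must lie in the ideal generated by l a b + mZ.\<close>
definition is_spline :: "int \<Rightarrow> (nat \<Rightarrow> nat \<Rightarrow> bool) \<Rightarrow> (nat \<Rightarrow> nat \<Rightarrow> int) \<Rightarrow> (nat \<Rightarrow> int) \<Rightarrow> bool" where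
  "is_spline m E l f \<longleftrightarrow> (\<forall>a b. E a b \<longrightarrow> (\<exists>c. [f a - f b = c * l a b] (mod m)))"

definition flow_up :: "int \<Rightarrow> (nat \<Rightarrow> nat \<Rightarrow> bool) \<Rightarrow> (nat \<Rightarrow> nat \<Rightarrow> int) \<Rightarrow> nat \<Rightarrow> (nat \<Rightarrow> int) \<Rightarrow> bool" where
  "flow_up m E l i f \<longleftrightarrow> is_spline m E l f \<and> \<not> [f i = 0] (mod m) \<and>
     (\<forall>t. 1 \<le> t \<and> t < i \<longrightarrow> [f t = 0] (mod m))"

definition trail_edges :: "nat list \<Rightarrow> (nat \<times> nat) list" where
  "trail_edges w = zip w (tl w)"

definition is_trail :: "(nat \<Rightarrow> nat \<Rightarrow> bool) \<Rightarrow> nat list \<Rightarrow> bool" where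
  "is_trail E w \<longleftrightarrow> w \<noteq> [] \<and> (\<forall>(a,b)\<in>set (trail_edges w). E a b) \<and>
     distinct (map (\<lambda>(a,b). {a,b}) (trail_edges w))"

definition trail_gcd :: "(nat \<Rightarrow> nat \<Rightarrow> int) \<Rightarrow> nat list \<Rightarrow> int" where
  "trail_gcd l w = Gcd ((\<lambda>(a,b). l a b) ` set (trail_edges w))"

definition trail_gcds :: "(nat \<Rightarrow> nat \<Rightarrow> bool) \<Rightarrow> (nat \<Rightarrow> nat \<Rightarrow> int) \<Rightarrow> nat \<Rightarrow> nat \<Rightarrow> int set" where
  "trail_gcds E l j k = {trail_gcd l w | w. is_trail E w \<and> hd w = j \<and> last w = k}"

end

theory Submission
  imports Defs "HOL-Computational_Algebra.Computational_Algebra"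
begin

lemma cong_mult_iff_gcd:
  fixes x d m :: int
  shows "(\<exists>c. [x = c * d] (mod m)) \<longleftrightarrow> gcd d m dvd x"
proof
  assume "\<exists>c. [x = c * d] (mod m)"
  then obtain c where "[x = c * d] (mod m)" by blast
  then have "m dvd x - c * d" by (simp add: cong_iff_dvd_diff cong_sym_eq)
  then obtain k where k: "x - c * d = m * k" by blast
  have "x = c * d + m * k" using k by simp
  moreover have "gcd d m dvd c * d + m * k" by simp
  ultimately show "gcd d m dvd x" by simp
next
  assume "gcd d m dvd x"
  then obtain t where t: "x = gcd d m * t" by blast
  obtain u v where uv: "u * d + v * m = gcd d m" using bezout_int by blast
  have "x = (t * u) * d + m * (t * v)" using t uv[symmetric] by (simp add: algebra_simps)
  hence "[x = (t * u) * d] (mod m)"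
    by (metis cong_add_lcancel_0 cong_mult_self_left cong_sym add.commute mult.commute)
  thus "\<exists>c. [x = c * d] (mod m)" by blast
qed

lemma path_lemma:
  assumes sp: "is_spline m E l f"
  shows "w \<noteq> [] \<Longrightarrow> (\<forall>(a,b)\<in>set (trail_edges w). E a b) \<Longrightarrow>
    gcd (trail_gcd l w) m dvd f (hd w) - f (last w)"
proof (induction w rule: induct_list012)
  case 1 then show ?case by simp
next
  case (2 x) then show ?case by simp
next
  case (3 a b rest)
  have te: "trail_edges (a # b # rest) = (a, b) # trail_edges (b # rest)"
    by (simp add: trail_edges_def)
  have tg: "trail_gcd l (a # b # rest) = gcd (l a b) (trail_gcd l (b # rest))"
    by (simp add: trail_gcd_def te)
  have Eab: "E a b" using 3(4) te by auto
  have IH: "gcd (trail_gcd l (b # rest)) m dvd f b - f (last (b # rest))"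
    using 3 te by auto
  from sp Eab obtain c where "[f a - f b = c * l a b] (mod m)"
    unfolding is_spline_def by blast
  hence d1: "gcd (l a b) m dvd f a - f b" using cong_mult_iff_gcd by blast
  let ?G = "gcd (l a b) (trail_gcd l (b # rest))"
  have "gcd ?G m dvd gcd (l a b) m" by (meson gcd_dvd1 gcd_dvd2 gcd_greatest dvd_trans)
  hence A: "gcd ?G m dvd f a - f b" using d1 dvd_trans by blast
  have "gcd ?G m dvd gcd (trail_gcd l (b # rest)) m" by (meson gcd_dvd1 gcd_dvd2 gcd_greatest dvd_trans)
  hence B: "gcd ?G m dvd f b - f (last (b # rest))" using IH dvd_trans by blast
  have "f a - f (last (b # rest)) = (f a - f b) + (f b - f (last (b # rest)))" by simp
  hence "gcd ?G m dvd f a - f (last (b # rest))" using A B by (metis dvd_add)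
  then show ?case using tg by simp
qed

lemma lcm_step:
  fixes S :: "int set"
  assumes "finite S" "\<forall>g\<in>S. gcd g m dvd x"
  shows "gcd (Lcm S) m dvd x"
  using assms
proof (induction S rule: finite_induct)
  case empty then show ?case by simp
next
  case (insert a A)
  have "gcd (Lcm (insert a A)) m = lcm (gcd a m) (gcd (Lcm A) m)"
    by (simp add: gcd.commute[of _ m] gcd_lcm_distrib)
  then show ?case using insert by (simp add: lcm_least)
qed

theorem mainTheorem2:
  fixes m :: int and n i j :: nat and E :: "nat \<Rightarrow> nat \<Rightarrow> bool"
    and l :: "nat \<Rightarrow> nat \<Rightarrow> int" and f :: "nat \<Rightarrow> int"
  assumes "m \<ge> 2"
    and "simple_graph n E" and "graph_connected n E" and "edge_labeling m E l"
    and "1 < i" and "i \<le> j" and "j \<le> n"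
    and "flow_up m E l i f"
    and "\<not> [Lcm (\<Union>k\<in>{1..<i}. trail_gcds E l j k) = 0] (mod m)"
  shows "\<exists>c. [f j = c * Lcm (\<Union>k\<in>{1..<i}. trail_gcds E l j k)] (mod m)"
proof -
  let ?S = "\<Union>k\<in>{1..<i}. trail_gcds E l j k"
  have sp: "is_spline m E l f" using assms(8) by (simp add: flow_up_def)
  define X where "X = (\<lambda>(a,b). l a b) ` ({1..n} \<times> {1..n})"
  have finX: "finite X" unfolding X_def by simp
  have sub: "?S \<subseteq> Gcd ` Pow X"
  proof
    fix g assume "g \<in> ?S"
    then obtain k w where w: "is_trail E w" "g = trail_gcd l w"
      unfolding trail_gcds_def by blast
    have "(\<lambda>(a,b). l a b) ` set (trail_edges w) \<subseteq> X"
    proof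
      fix y assume "y \<in> (\<lambda>(a,b). l a b) ` set (trail_edges w)"
      then obtain a b where ab: "(a,b) \<in> set (trail_edges w)" "y = l a b" by auto
      have "E a b" using w(1) ab(1) unfolding is_trail_def by auto
      hence "a \<in> {1..n}" "b \<in> {1..n}" using assms(2) unfolding simple_graph_def by blast+
      thus "y \<in> X" unfolding X_def using ab(2) by force
    qed
    thus "g \<in> Gcd ` Pow X" using w(2) unfolding trail_gcd_def by blast
  qed
  have finS: "finite ?S" using finite_subset[OF sub] finX by blast
  have all: "\<forall>g\<in>?S. gcd g m dvd f j"
  proof
    fix g assume "g \<in> ?S"
    then obtain k w where k: "k \<in> {1..<i}" and w: "is_trail E w" "hd w = j" "last w = k"
      "g = trail_gcd l w"
      unfolding trail_gcds_def by blast
    have "gcd g m dvd f j - f k"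
      using path_lemma[OF sp, of w] w unfolding is_trail_def by auto
    moreover have "[f k = 0] (mod m)" using assms(8) k unfolding flow_up_def by auto
    hence "m dvd f k" by (simp add: cong_0_iff)
    hence "gcd g m dvd f k" by (meson dvd_trans gcd_dvd2)
    ultimately have "gcd g m dvd (f j - f k) + f k" by (metis dvd_add)
    thus "gcd g m dvd f j" by simp
  qed
  have "gcd (Lcm ?S) m dvd f j" using lcm_step[OF finS all] .
  thus ?thesis using cong_mult_iff_gcd by blast
qed

end
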